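(* Let $n$ and $a$ be positive integers with $n \equiv 0 \pmod 4$, $a \equiv 0 \pmod 4$, $0 < a < n$, and such that $p = \frac{a}{4} + \frac{n}{4}$ is a prime number. Let $$\Sigma = \{x = (x_1,\dots,x_n) : x_i \in \{-1,1\} \text{ for all } i,\ x_1 = 1,\ x_1+\dots+x_n = 0\}.$$ If $Q \subset \Sigma$ satisfies $|Q| > \sum_{i=0}^{p-1}\binom{n}{i}$, then there exist $x, y \in Q$ with $(x,y) = -a$, where $(\cdot,\cdot)$ is the standard inner product on $\mathbb{R}^n$. *)

theory Defs
  imports Main "HOL-Computational_Algebra.Primes"
begin

text \<open>Vectors in R^n with coordinates x_1..x_n are represented as functions
  nat \<Rightarrow> int on indices 1..n, required to be 0 outside {1..n}.\<close>

definition Sigma_set :: "nat \<Rightarrow> (nat \<Rightarrow> int) set" where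
  "Sigma_set n = {x. (\<forall>i\<in>{1..n}. x i \<in> {-1, 1}) \<and> (\<forall>i. i \<notin> {1..n} \<longrightarrow> x i = 0)
                     \<and> x 1 = 1 \<and> (\<Sum>i=1..n. x i) = 0}"

definition inner_n :: "nat \<Rightarrow> (nat \<Rightarrow> int) \<Rightarrow> (nat \<Rightarrow> int) \<Rightarrow> int" where
  "inner_n n x y = (\<Sum>i=1..n. x i * y i)"

end

theory Submission
  imports Defs "Jordan_Normal_Form.Determinant"
begin

definition Zs :: "nat \<Rightarrow> (nat \<Rightarrow> int) set" where
  "Zs n = {z. \<forall>i\<in>{1..n}. z i \<in> {-1,1}}"
definition Ms :: "nat \<Rightarrow> nat \<Rightarrow> nat set set" where
  "Ms n d = {S. S \<subseteq> {1..n} \<and> card S \<le> d}"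
definition mn :: "nat set \<Rightarrow> (nat \<Rightarrow> int) \<Rightarrow> int" where
  "mn S z = (\<Prod>i\<in>S. z i)"
definition inspan :: "nat \<Rightarrow> nat \<Rightarrow> ((nat\<Rightarrow>int) \<Rightarrow> int) \<Rightarrow> bool" where
  "inspan n d g \<longleftrightarrow> (\<exists>c. \<forall>z\<in>Zs n. g z = (\<Sum>S\<in>Ms n d. c S * mn S z))"

lemma finite_Ms: "finite (Ms n d)"
proof -
  have "Ms n d \<subseteq> Pow {1..n}" unfolding Ms_def by auto
  then show ?thesis by (rule finite_subset) auto
qed

lemma inspan_cong: "(\<And>z. z \<in> Zs n \<Longrightarrow> g z = h z) \<Longrightarrow> inspan n d g \<Longrightarrow> inspan n d h"
  unfolding inspan_def by metis

lemma inspan_mono: assumes "d \<le> e" "inspan n d g" shows "inspan n e g"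
proof -
  obtain c where c: "\<forall>z\<in>Zs n. g z = (\<Sum>S\<in>Ms n d. c S * mn S z)" using assms(2) inspan_def by blast
  have sub: "Ms n d \<subseteq> Ms n e" using assms(1) unfolding Ms_def by auto
  have "\<forall>z\<in>Zs n. g z = (\<Sum>S\<in>Ms n e. (if S \<in> Ms n d then c S else 0) * mn S z)"
  proof
    fix z assume z: "z \<in> Zs n"
    have "(\<Sum>S\<in>Ms n e. (if S \<in> Ms n d then c S else 0) * mn S z) = (\<Sum>S\<in>Ms n d. c S * mn S z)"
      by (rule sum.mono_neutral_cong_right) (use sub finite_Ms in auto)
    then show "g z = (\<Sum>S\<in>Ms n e. (if S \<in> Ms n d then c S else 0) * mn S z)" using c z by simp
  qed
  then show ?thesis unfolding inspan_def by (intro exI[of _ "\<lambda>S. if S \<in> Ms n d then c S else 0"])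
qed

lemma inspan_add: assumes "inspan n d g" "inspan n d h" shows "inspan n d (\<lambda>z. g z + h z)"
proof -
  obtain c where c: "\<forall>z\<in>Zs n. g z = (\<Sum>S\<in>Ms n d. c S * mn S z)" using assms(1) inspan_def by blast
  obtain c' where c': "\<forall>z\<in>Zs n. h z = (\<Sum>S\<in>Ms n d. c' S * mn S z)" using assms(2) inspan_def by blast
  have "\<forall>z\<in>Zs n. g z + h z = (\<Sum>S\<in>Ms n d. (c S + c' S) * mn S z)"
    using c c' by (simp add: distrib_right sum.distrib)
  then show ?thesis unfolding inspan_def by (intro exI[of _ "\<lambda>S. c S + c' S"])
qed

lemma inspan_smult: assumes "inspan n d g" shows "inspan n d (\<lambda>z. k * g z)"
proof -
  obtain c where c: "\<forall>z\<in>Zs n. g z = (\<Sum>S\<in>Ms n d. c S * mn S z)" using assms(1) inspan_def by blast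
  have "\<forall>z\<in>Zs n. k * g z = (\<Sum>S\<in>Ms n d. (k * c S) * mn S z)"
    using c by (simp add: sum_distrib_left mult.assoc)
  then show ?thesis unfolding inspan_def by (intro exI[of _ "\<lambda>S. k * c S"])
qed

lemma inspan_zero: "inspan n d (\<lambda>z. 0)"
  unfolding inspan_def by (rule exI[of _ "\<lambda>S. 0"]) simp

lemma inspan_sum: assumes "finite I" "\<And>i. i \<in> I \<Longrightarrow> inspan n d (g i)"
  shows "inspan n d (\<lambda>z. \<Sum>i\<in>I. g i z)"
  using assms
proof (induction I rule: finite_induct)
  case empty
  then show ?case by (simp add: inspan_zero)
next
  case (insert x F)
  then show ?case by (simp add: inspan_add)
qed

lemma inspan_mn: assumes "T \<in> Ms n d" shows "inspan n d (mn T)"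
proof -
  have "\<forall>z\<in>Zs n. mn T z = (\<Sum>S\<in>Ms n d. (if S = T then 1 else 0) * mn S z)"
  proof
    fix z
    have "(\<Sum>S\<in>Ms n d. (if S = T then 1 else 0) * mn S z) = (\<Sum>S\<in>Ms n d. if S = T then mn S z else 0)"
      by (rule sum.cong) auto
    also have "\<dots> = mn T z" using assms finite_Ms by (simp add: sum.delta)
    finally show "mn T z = (\<Sum>S\<in>Ms n d. (if S = T then 1 else 0) * mn S z)" by simp
  qed
  then show ?thesis unfolding inspan_def by (intro exI[of _ "\<lambda>S. if S = T then 1 else 0"])
qed

lemma mn_times:
  assumes z: "z \<in> Zs n" and i: "i \<in> {1..n}" and S: "S \<subseteq> {1..n}"
  shows "mn S z * z i = mn (if i \<in> S then S - {i} else insert i S) z"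
proof -
  have fS: "finite S" using S finite_subset by blast
  have "z i = -1 \<or> z i = 1" using z i unfolding Zs_def by auto
  then have zi: "z i * z i = 1" by auto
  show ?thesis
  proof (cases "i \<in> S")
    case True
    then have "mn S z = z i * mn (S - {i}) z" unfolding mn_def using fS
      by (simp add: prod.remove)
    then show ?thesis using True zi by (simp add: mult.commute mult.left_commute)
  next
    case False
    then show ?thesis unfolding mn_def using fS by (simp add: mult.commute)
  qed
qed

lemma inspan_times_var: assumes "inspan n d g" "i \<in> {1..n}"
  shows "inspan n (Suc d) (\<lambda>z. g z * z i)"
proof -
  obtain c where c: "\<forall>z\<in>Zs n. g z = (\<Sum>S\<in>Ms n d. c S * mn S z)" using assms(1) inspan_def by blast
  define T where "T S = (if i \<in> S then S - {i} else insert i S)" for S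
  have TM: "T S \<in> Ms n (Suc d)" if "S \<in> Ms n d" for S
  proof -
    have S: "S \<subseteq> {1..n}" "card S \<le> d" using that unfolding Ms_def by auto
    have fS: "finite S" using S finite_subset by blast
    have "card (insert i S) \<le> Suc (card S)" using fS by (simp add: card_insert_le_m1 card_insert_if)
    moreover have "card (S - {i}) \<le> card S" using fS by (simp add: card_mono)
    ultimately show ?thesis using S assms(2) unfolding T_def Ms_def by auto
  qed
  have A: "inspan n (Suc d) (\<lambda>z. \<Sum>S\<in>Ms n d. c S * mn (T S) z)"
    by (rule inspan_sum[OF finite_Ms]) (rule inspan_smult, rule inspan_mn, rule TM)
  have B: "g z * z i = (\<Sum>S\<in>Ms n d. c S * mn (T S) z)" if z: "z \<in> Zs n" for z
  proof -
    have "g z * z i = (\<Sum>S\<in>Ms n d. c S * (mn S z * z i))"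
      using c z by (simp add: sum_distrib_right mult.assoc)
    also have "\<dots> = (\<Sum>S\<in>Ms n d. c S * mn (T S) z)"
    proof (rule sum.cong[OF refl])
      fix S assume "S \<in> Ms n d"
      then have "S \<subseteq> {1..n}" by (simp add: Ms_def)
      then show "c S * (mn S z * z i) = c S * mn (T S) z"
        using mn_times[OF z assms(2)] by (simp add: T_def)
    qed
    finally show ?thesis .
  qed
  show ?thesis by (rule inspan_cong[OF _ A]) (simp add: B)
qed

lemma inspan_times_inner: assumes "inspan n d g"
  shows "inspan n (Suc d) (\<lambda>z. g z * inner_n n x z)"
proof -
  have "inspan n (Suc d) (\<lambda>z. \<Sum>i\<in>{1..n}. x i * (g z * z i))"
    by (rule inspan_sum) (auto intro!: inspan_smult inspan_times_var assms)
  then show ?thesis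
    by (rule inspan_cong[rotated]) (simp add: inner_n_def sum_distrib_left mult_ac)
qed

lemma inspan_poly: "inspan n k (\<lambda>z. \<Prod>j\<in>{1..k}. (inner_n n x z + int a - int j))"
proof (induction k)
  case 0
  have "{} \<in> Ms n 0" unfolding Ms_def by auto
  from inspan_mn[OF this] show ?case by (rule inspan_cong[rotated]) (simp add: mn_def)
next
  case (Suc k)
  let ?g = "\<lambda>z. \<Prod>j\<in>{1..k}. (inner_n n x z + int a - int j)"
  have "inspan n (Suc k) (\<lambda>z. ?g z * inner_n n x z + (int a - int (Suc k)) * ?g z)"
    by (rule inspan_add[OF inspan_times_inner[OF Suc.IH] inspan_mono[OF _ inspan_smult[OF Suc.IH]]]) simp
  then show ?case
    by (rule inspan_cong[rotated]) (simp add: prod.cl_ivl_Suc algebra_simps)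
qed


lemma sig_pm: "x \<in> Sigma_set n \<Longrightarrow> i \<in> {1..n} \<Longrightarrow> x i = -1 \<or> x i = 1"
  unfolding Sigma_set_def by auto

lemma sig_Zs: "x \<in> Sigma_set n \<Longrightarrow> x \<in> Zs n"
  unfolding Sigma_set_def Zs_def by auto

lemma inner_self: assumes "x \<in> Sigma_set n" shows "inner_n n x x = int n"
proof -
  have "inner_n n x x = (\<Sum>i=1..n. 1)"
    unfolding inner_n_def by (rule sum.cong[OF refl]) (use sig_pm[OF assms] in force)
  then show ?thesis by simp
qed

lemma inner_dvd4: assumes x: "x \<in> Sigma_set n" and y: "y \<in> Sigma_set n"
  shows "4 dvd (inner_n n x y + int n)"
proof -
  have sx: "(\<Sum>i=1..n. x i) = 0" and sy: "(\<Sum>i=1..n. y i) = 0" using x y unfolding Sigma_set_def by auto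
  have "(\<Sum>i=1..n. (1 + x i) * (1 + y i)) = (\<Sum>i=1..n. 1 + x i + y i + x i * y i)"
    by (rule sum.cong) (auto simp: algebra_simps)
  also have "\<dots> = int n + inner_n n x y"
    using sx sy by (simp add: sum.distrib inner_n_def)
  finally have e: "(\<Sum>i=1..n. (1 + x i) * (1 + y i)) = int n + inner_n n x y" .
  have "4 dvd (\<Sum>i=1..n. (1 + x i) * (1 + y i))"
  proof (rule dvd_sum)
    fix i assume "i \<in> {1..n}"
    then show "4 dvd (1 + x i) * (1 + y i)" using sig_pm[OF x] sig_pm[OF y] by fastforce
  qed
  then show ?thesis using e by (simp add: add.commute)
qed

lemma inner_lower: assumes x: "x \<in> Sigma_set n" and y: "y \<in> Sigma_set n" and n: "1 \<le> n"
  shows "2 \<le> inner_n n x y + int n"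
proof -
  have "(\<Sum>i=1..n. x i * y i + 1) = inner_n n x y + int n" by (simp add: sum.distrib inner_n_def)
  moreover have "x 1 * y 1 + 1 \<le> (\<Sum>i=1..n. x i * y i + 1)"
  proof (rule member_le_sum)
    fix i assume "i \<in> {1..n} - {1}"
    then show "0 \<le> x i * y i + 1" using sig_pm[OF x, of i] sig_pm[OF y, of i] by auto
  qed (use n in auto)
  moreover have "x 1 = 1" "y 1 = 1" using x y unfolding Sigma_set_def by auto
  ultimately show ?thesis by simp
qed

lemma inner_upper: assumes x: "x \<in> Sigma_set n" and y: "y \<in> Sigma_set n" and ne: "x \<noteq> y"
  shows "inner_n n x y + 2 \<le> int n"
proof -
  obtain i where i: "x i \<noteq> y i" using ne by auto
  have i1: "i \<in> {1..n}"
  proof (rule ccontr)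
    assume "i \<notin> {1..n}"
    then have "x i = 0" "y i = 0" using x y unfolding Sigma_set_def by auto
    then show False using i by simp
  qed
  have "(\<Sum>j=1..n. 1 - x j * y j) = int n - inner_n n x y" by (simp add: sum_subtractf inner_n_def)
  moreover have "1 - x i * y i \<le> (\<Sum>j=1..n. 1 - x j * y j)"
  proof (rule member_le_sum)
    fix j assume "j \<in> {1..n} - {i}"
    then show "0 \<le> 1 - x j * y j" using sig_pm[OF x, of j] sig_pm[OF y, of j] by auto
  qed (use i1 in auto)
  moreover have "1 - x i * y i = 2" using sig_pm[OF x i1] sig_pm[OF y i1] i by auto
  ultimately show ?thesis by simp
qed

lemma card_Ms: "card (Ms n d) = (\<Sum>i=0..d. n choose i)"
proof -
  have "Ms n d = (\<Union>i\<in>{0..d}. {S. S \<subseteq> {1..n} \<and> card S = i})" unfolding Ms_def by auto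
  have fin: "\<And>i. finite {S. S \<subseteq> {1..n} \<and> card S = i}"
    by (rule finite_subset[of _ "Pow {1..n}"]) auto
  have "card (\<Union>i\<in>{0..d}. {S. S \<subseteq> {1..n} \<and> card S = i}) = (\<Sum>i\<in>{0..d}. card {S. S \<subseteq> {1..n} \<and> card S = i})"
    by (rule card_UN_disjoint) (use fin in auto)
  then have "card (Ms n d) = (\<Sum>i\<in>{0..d}. card {S. S \<subseteq> {1..n} \<and> card S = i})"
    using \<open>Ms n d = _\<close> by simp
  also have "\<dots> = (\<Sum>i=0..d. n choose i)" by (simp add: n_subsets)
  finally show ?thesis .
qed

theorem mainTheorem5:
  fixes n a p :: nat and Q :: "(nat \<Rightarrow> int) set"
  assumes "0 < a" and "a < n"
    and "4 dvd n" and "4 dvd a"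
    and "p = a div 4 + n div 4"
    and "prime p"
    and "Q \<subseteq> Sigma_set n"
    and "card Q > (\<Sum>i=0..p-1. n choose i)"
  shows "\<exists>x\<in>Q. \<exists>y\<in>Q. inner_n n x y = - int a"
proof (rule ccontr)
  assume nex: "\<not> ?thesis"
  note QS = assms(7)
  have finQ: "finite Q"
  proof (rule ccontr)
    assume "infinite Q" then show False using assms(8) by simp
  qed
  have p4n: "4 * p = n + a" using assms(3,4,5) by presburger
  then have p4: "4 * int p = int n + int a" by linarith
  have pge: "p \<ge> 3" using assms(1-5) by presburger
  have pp: "prime (int p)" using assms(6) by simp
  have n1: "1 \<le> n" using assms(2) by simp
  have key: "\<not> int p dvd (inner_n n x y + int a)" if xy: "x \<in> Q" "y \<in> Q" "x \<noteq> y" for x y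
  proof
    assume d: "int p dvd (inner_n n x y + int a)"
    have xs: "x \<in> Sigma_set n" "y \<in> Sigma_set n" using xy QS by auto
    have h1: "4 dvd inner_n n x y + int n" by (rule inner_dvd4[OF xs])
    have h2: "4 dvd int n" using assms(3) by presburger
    have h3: "4 dvd int a" using assms(4) by presburger
    have "4 dvd inner_n n x y + int n - int n + int a"
      by (rule dvd_add[OF dvd_diff[OF h1 h2] h3])
    then have "4 dvd inner_n n x y + int a" by simp
    then obtain t where t: "inner_n n x y + int a = 4 * t" by blast
    have lo: "2 \<le> inner_n n x y + int n" by (rule inner_lower[OF xs n1])
    have hi: "inner_n n x y + 2 \<le> int n" by (rule inner_upper[OF xs xy(3)])
    have "inner_n n x y \<noteq> - int a" using nex xy by auto
    then have t0: "t \<noteq> 0" using t by auto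
    have tlt: "\<bar>t\<bar> < int p" using lo hi t p4 assms(1) by linarith
    have "\<not> int p dvd 4"
    proof
      assume "int p dvd 4"
      then have "int p dvd int 4" by simp
      then have p4d: "p dvd 4" by (simp only: int_dvd_int_iff)
      then have "p \<le> 4" by (simp add: dvd_imp_le)
      then have "p = 3 \<or> p = 4" using pge by auto
      moreover have "\<not> prime (4::nat)"
      proof
        assume "prime (4::nat)"
        then have "\<forall>m. m dvd (4::nat) \<longrightarrow> m = 1 \<or> m = 4" by (simp add: prime_nat_iff)
        from this[rule_format, of 2] show False by simp
      qed
      moreover have "\<not> (3::nat) dvd 4" by simp
      ultimately show False using p4d assms(6) by auto
    qed
    then have "int p dvd t" using d t pp by (simp add: prime_dvd_mult_iff)
    then have "\<bar>int p\<bar> \<le> \<bar>t\<bar>" using t0 by (rule dvd_imp_le_int[rotated])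
    then show False using tlt by simp
  qed
  define f where "f x z = (\<Prod>j\<in>{1..p-1}. (inner_n n x z + int a - int j))" for x z
  have fdiag: "\<not> int p dvd f x x" if "x \<in> Q" for x
  proof
    assume "int p dvd f x x"
    then obtain j where j: "j \<in> {1..p-1}" "int p dvd inner_n n x x + int a - int j"
      unfolding f_def using pp by (auto simp: prime_dvd_prod_iff)
    have "inner_n n x x + int a - int j = int p * 4 - int j"
      using inner_self[of x n] that QS p4 by auto
    then have "int p dvd int p * 4 - int j" using j(2) by simp
    from dvd_diff[OF dvd_triv_left[of "int p" 4] this] have "int p dvd int j" by simp
    then have "p dvd j" by simp
    then show False using j(1) by (auto dest: dvd_imp_le)
  qed
  have foff: "int p dvd f x y" if "x \<in> Q" "y \<in> Q" "x \<noteq> y" for x y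
  proof -
    let ?s = "inner_n n x y + int a"
    define r where "r = ?s mod int p"
    have r0: "r \<noteq> 0" using key[OF that] unfolding r_def by (simp add: dvd_eq_mod_eq_0)
    have r1: "0 \<le> r" "r < int p" unfolding r_def using pge by auto
    have jin: "nat r \<in> {1..p-1}" using r0 r1 by auto
    have "int p dvd ?s - int (nat r)" using r1 unfolding r_def
      by (simp add: mod_0_imp_dvd mod_diff_left_eq)
    also have "\<dots> dvd f x y" unfolding f_def
      using dvd_prodI[OF _ jin, of "\<lambda>j. inner_n n x y + int a - int j"] by simp
    finally show ?thesis .
  qed
  have Cex: "\<forall>x\<in>Q. \<exists>c. \<forall>z\<in>Zs n. f x z = (\<Sum>S\<in>Ms n (p-1). c S * mn S z)"
    using inspan_poly[of n "p-1"] unfolding f_def inspan_def by blast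
  obtain C where C0: "\<forall>x\<in>Q. \<forall>z\<in>Zs n. f x z = (\<Sum>S\<in>Ms n (p-1). C x S * mn S z)"
    using bchoice[OF Cex] by blast
  have C: "\<And>x z. x \<in> Q \<Longrightarrow> z \<in> Zs n \<Longrightarrow> f x z = (\<Sum>S\<in>Ms n (p-1). C x S * mn S z)"
    using C0 by blast
  obtain qs where qs: "set qs = Q" "distinct qs" using finite_distinct_list[OF finQ] by blast
  obtain ss where ss: "set ss = Ms n (p-1)" "distinct ss" using finite_distinct_list[OF finite_Ms] by blast
  define m where "m = length qs"
  define N where "N = length ss"
  have mQ: "m = card Q" using distinct_card[OF qs(2)] qs(1) m_def by simp
  have NM: "N = card (Ms n (p-1))" using distinct_card[OF ss(2)] ss(1) N_def by simp
  have Nm: "N < m" using mQ NM card_Ms assms(8) by simp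
  have qsQ: "qs ! i \<in> Q" if "i < m" for i using qs that m_def by auto
  define MA where "MA = mat m m (\<lambda>(i,k). if k < N then C (qs!i) (ss!k) else 0)"
  define MB where "MB = mat m m (\<lambda>(k,j). if k < N then mn (ss!k) (qs!j) else 0)"
  define MM where "MM = mat m m (\<lambda>(i,j). f (qs!i) (qs!j))"
  have MAc: "MA \<in> carrier_mat m m" and MBc: "MB \<in> carrier_mat m m" and MMc: "MM \<in> carrier_mat m m"
    unfolding MA_def MB_def MM_def by auto
  have prodeq: "MA * MB = MM"
  proof (rule eq_matI)
    fix i j assume ij: "i < dim_row MM" "j < dim_col MM"
    then have ij': "i < m" "j < m" unfolding MM_def by auto
    have "(MA * MB) $$ (i,j) = (\<Sum>k\<in>{0..<m}. (if k < N then C (qs!i) (ss!k) else 0) * (if k < N then mn (ss!k) (qs!j) else 0))"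
      using ij' unfolding MA_def MB_def by (simp add: scalar_prod_def)
    also have "\<dots> = (\<Sum>k\<in>{0..<N}. C (qs!i) (ss!k) * mn (ss!k) (qs!j))"
      by (rule sum.mono_neutral_cong_right) (use Nm in auto)
    also have "\<dots> = (\<Sum>S\<in>Ms n (p-1). C (qs!i) S * mn S (qs!j))"
      using sum.reindex_bij_betw[OF bij_betw_nth[OF ss(2) refl refl], of "\<lambda>S. C (qs!i) S * mn S (qs!j)"]
      ss(1) by (simp add: N_def atLeast0LessThan)
    also have "\<dots> = f (qs!i) (qs!j)"
      using C[OF qsQ[OF ij'(1)] sig_Zs] qsQ[OF ij'(2)] QS by auto
    also have "\<dots> = MM $$ (i,j)" using ij' unfolding MM_def by simp
    finally show "(MA * MB) $$ (i,j) = MM $$ (i,j)" .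
  qed (auto simp: MA_def MB_def MM_def)
  have detA: "det MA = 0"
  proof -
    have Z: "signof \<pi> * (\<Prod>i = 0..<m. MA $$ (i, \<pi> i)) = 0" if pi: "\<pi> permutes {0..<m}" for \<pi>
    proof -
      have "m - 1 \<in> \<pi> ` {0..<m}" using permutes_image[OF pi] Nm by auto
      then obtain i where i: "i < m" "\<pi> i = m - 1" by auto
      have "MA $$ (i, \<pi> i) = 0" and "i \<in> {0..<m}" using i Nm unfolding MA_def by auto
      then have "(\<Prod>i = 0..<m. MA $$ (i, \<pi> i)) = 0" by (intro prod_zero) blast+
      then show ?thesis by simp
    qed
    have "det MA = (\<Sum>\<pi>\<in>{\<pi>. \<pi> permutes {0..<m}}. signof \<pi> * (\<Prod>i = 0..<m. MA $$ (i, \<pi> i)))"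
      by (rule det_def'[OF MAc])
    also have "\<dots> = 0" by (rule sum.neutral) (use Z in blast)
    finally show ?thesis .
  qed
  have detM0: "det MM = 0" using det_mult[OF MAc MBc] detA prodeq by simp
  have "\<not> int p dvd det MM"
  proof
    assume dd: "int p dvd det MM"
    let ?P = "{\<pi>. \<pi> permutes {0..<m}}"
    let ?t = "\<lambda>\<pi>. signof \<pi> * (\<Prod>i = 0..<m. MM $$ (i, \<pi> i))"
    have finP: "finite ?P" by (simp add: finite_permutations)
    have idP: "id \<in> ?P" by (simp add: permutes_id)
    have "det MM = ?t id + (\<Sum>\<pi>\<in>?P - {id}. ?t \<pi>)"
      using det_def'[OF MMc] sum.remove[OF finP idP, of ?t] by simp
    moreover have "int p dvd (\<Sum>\<pi>\<in>?P - {id}. ?t \<pi>)"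
    proof (rule dvd_sum)
      fix \<pi> assume pi: "\<pi> \<in> ?P - {id}"
      then have perm: "\<pi> permutes {0..<m}" and nid: "\<pi> \<noteq> id" by auto
      obtain i where i: "\<pi> i \<noteq> i" using nid by (auto simp: fun_eq_iff)
      have im: "i < m" using i permutes_not_in[OF perm] by fastforce
      have pim: "\<pi> i < m" using permutes_in_image[OF perm] im by auto
      have "qs ! i \<noteq> qs ! (\<pi> i)" using qs(2) im pim i m_def by (simp add: nth_eq_iff_index_eq)
      then have "int p dvd MM $$ (i, \<pi> i)"
        using foff[OF qsQ[OF im] qsQ[OF pim]] im pim unfolding MM_def by simp
      also have "\<dots> dvd (\<Prod>i = 0..<m. MM $$ (i, \<pi> i))" using im by (intro dvd_prodI) auto
      finally show "int p dvd ?t \<pi>" by simp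
    qed
    ultimately have "int p dvd ?t id" using dd by (simp add: dvd_add_left_iff)
    then have "int p dvd (\<Prod>i = 0..<m. MM $$ (i, i))" by (simp add: sign_id)
    then obtain i where i: "i < m" "int p dvd MM $$ (i, i)" using pp by (auto simp: prime_dvd_prod_iff)
    then show False using fdiag[OF qsQ[OF i(1)]] unfolding MM_def by simp
  qed
  then show False using detM0 by simp
qed

end
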